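(* Let $\mathcal{G}=(\mathcal{V},\mathcal{A})$ be the information-flow graph of a single-sender single-uniprior index-coding instance with message lengths $q_1,\dots,q_n$. Then \[ \ell^*(\mathcal{G}) \geq \max_{\mathcal{G}'=(\mathcal{V},\mathcal{A}'):\ \mathcal{A}'\subseteq\mathcal{A}} \ \sum_{i:\ i \text{ is a predecessor of some vertex in } \mathcal{L}(\mathcal{G}')} q_i . \]
   Context: Single-sender single-uniprior index coding: there are $n$ receivers and $n$ independent messages $x_1,\dots,x_n$; message $x_i$ consists of $q_i\ge 1$ bits, each independently uniformly distributed on $\{0,1\}$. A single sender knows all messages. Receiver $i$ knows $x_i$ a priori and requests a set $\mathcal{W}_i$ of messages with $x_i\notin\mathcal{W}_i$. The information-flow graph is the directed graph $\mathcal{G}=(\mathcal{V},\mathcal{A})$ with $\mathcal{V}=\{1,\dots,n\}$ and an arc $(j\to i)\in\mathcal{A}$ iff $x_j\in\mathcal{W}_i$. An index code of length $\ell$ consists of an encoding function $E:\{0,1\}^{\sum_i q_i}\to\{0,1\}^\ell$ and, for each receiver $i$, a decoding function $D_i$ such that $D_i(E(x_1,\dots,x_n),x_i)$ equals the tuple of messages in $\mathcal{W}_i$ for all values of the messages. $\ell^*(\mathcal{G})$ denotes the minimum length of an index code. For a directed graph $\mathcal{H}$, a leaf vertex is a vertex with no outgoing arcs and $\mathcal{L}(\mathcal{H})$ is the set of leaf vertices of $\mathcal{H}$. A vertex $j$ is a predecessor of vertex $i$ in $\mathcal{H}$ iff there is a directed path in $\mathcal{H}$ from $j$ to $i$. 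*)

theory Defs
  imports Main
begin

(* Vertices are {1..n}; message x_i is a bit string (bool list) of length q i.
   A message assignment is canonical: x j = [] outside {1..n}. *)
definition valid_msgs :: "nat \<Rightarrow> (nat \<Rightarrow> nat) \<Rightarrow> (nat \<Rightarrow> bool list) \<Rightarrow> bool" where
  "valid_msgs n q x \<longleftrightarrow> (\<forall>i\<in>{1..n}. length (x i) = q i) \<and> (\<forall>j. j \<notin> {1..n} \<longrightarrow> x j = [])"

(* Information-flow graph arcs A: (j,i) \<in> A iff x_j \<in> W_i. *)
definition is_index_code ::
  "nat \<Rightarrow> (nat \<Rightarrow> nat) \<Rightarrow> (nat \<times> nat) set \<Rightarrow> nat \<Rightarrow>
   ((nat \<Rightarrow> bool list) \<Rightarrow> bool list) \<Rightarrow> (nat \<Rightarrow> bool list \<Rightarrow> bool list \<Rightarrow> nat \<Rightarrow> bool list) \<Rightarrow> bool" where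
  "is_index_code n q A l E D \<longleftrightarrow>
     (\<forall>x. valid_msgs n q x \<longrightarrow>
        length (E x) = l \<and>
        (\<forall>i\<in>{1..n}. \<forall>j. (j, i) \<in> A \<longrightarrow> D i (E x) (x i) j = x j))"

definition has_index_code :: "nat \<Rightarrow> (nat \<Rightarrow> nat) \<Rightarrow> (nat \<times> nat) set \<Rightarrow> nat \<Rightarrow> bool" where
  "has_index_code n q A l \<longleftrightarrow> (\<exists>E D. is_index_code n q A l E D)"

definition opt_len :: "nat \<Rightarrow> (nat \<Rightarrow> nat) \<Rightarrow> (nat \<times> nat) set \<Rightarrow> nat" where
  "opt_len n q A = (LEAST l. has_index_code n q A l)"

definition leaves :: "nat set \<Rightarrow> (nat \<times> nat) set \<Rightarrow> nat set" where
  "leaves V A' = {i \<in> V. \<not> (\<exists>k. (i, k) \<in> A')}"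

definition predecessor :: "(nat \<times> nat) set \<Rightarrow> nat \<Rightarrow> nat \<Rightarrow> bool" where
  "predecessor A' j i \<longleftrightarrow> (j, i) \<in> A'\<^sup>+"

end

theory Submission
  imports Defs "HOL-Library.FuncSet"
begin

lemma bool_lists_card: "card {xs::bool list. length xs = k} = 2 ^ k"
  and bool_lists_fin: "finite {xs::bool list. length xs = k}"
proof -
  have e: "{xs::bool list. length xs = k} = {xs. set xs \<subseteq> UNIV \<and> length xs = k}" by simp
  show "card {xs::bool list. length xs = k} = 2 ^ k"
    unfolding e card_lists_length_eq[OF finite_UNIV] by (simp add: card_UNIV_bool)
  show "finite {xs::bool list. length xs = k}"
    unfolding e by (rule finite_lists_length_eq) simp
qed

lemma code_exists: "has_index_code n q A (\<Sum>k\<in>{1..n}. q k)"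
proof -
  define E where "E = (\<lambda>x::nat \<Rightarrow> bool list. concat (map x [1..<n+1]))"
  define D where "D = (\<lambda>(i::nat) e (y::bool list). (THE x. valid_msgs n q x \<and> E x = e))"
  have len: "length (E x) = (\<Sum>k\<in>{1..n}. q k)" if "valid_msgs n q x" for x
  proof -
    have "length (E x) = sum_list (map (length \<circ> x) [1..<n+1])"
      by (simp add: E_def length_concat)
    also have "\<dots> = sum (length \<circ> x) (set [1..<n+1])"
      by (rule sum_list_distinct_conv_sum_set) simp
    also have "\<dots> = (\<Sum>k\<in>{1..<n+1}. length (x k))"
      by (simp only: set_upt comp_def)
    also have "\<dots> = (\<Sum>k\<in>{1..n}. q k)"
      using that unfolding valid_msgs_def
      by (intro sum.cong) auto
    finally show ?thesis .
  qed
  have inj: "x = x'" if "valid_msgs n q x" "valid_msgs n q x'" "E x = E x'" for x x'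
  proof -
    have z: "zip (map x L) (map x' L) = map (\<lambda>k. (x k, x' k)) L" for L :: "nat list"
      by (induct L) auto
    have "map x [1..<n+1] = map x' [1..<n+1]"
    proof (rule concat_injective)
      show "concat (map x [1..<n+1]) = concat (map x' [1..<n+1])" using that(3) by (simp add: E_def)
      show "length (map x [1..<n+1]) = length (map x' [1..<n+1])" by simp
      show "\<forall>(a, b)\<in>set (zip (map x [1..<n+1]) (map x' [1..<n+1])). length a = length b"
        unfolding z using that(1,2) unfolding valid_msgs_def
        by (auto simp del: upt_Suc)
    qed
    then have "\<forall>j\<in>set [1..<n+1]. x j = x' j" by (simp only: map_eq_conv)
    then have "\<forall>j\<in>{1..n}. x j = x' j" by (simp only: set_upt) auto
    show ?thesis
    proof (rule ext)
      fix j show "x j = x' j"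
        using that(1,2) \<open>\<forall>j\<in>{1..n}. x j = x' j\<close> unfolding valid_msgs_def
        by (cases "j \<in> {1..n}") auto
    qed
  qed
  have "is_index_code n q A (\<Sum>k\<in>{1..n}. q k) E D"
    unfolding is_index_code_def
  proof (intro allI impI conjI ballI)
    fix x i j assume v: "valid_msgs n q x"
    show "length (E x) = (\<Sum>k\<in>{1..n}. q k)" using len[OF v] .
    have "(THE x'. valid_msgs n q x' \<and> E x' = E x) = x"
      using v inj by (intro the_equality) auto
    then show "(j, i) \<in> A \<Longrightarrow> D i (E x) (x i) j = x j" by (simp add: D_def)
  qed
  then show ?thesis unfolding has_index_code_def by blast
qed

lemma decode_path:
  assumes code: "is_index_code n q A l E D"
    and sub: "A' \<subseteq> A" and AV: "A \<subseteq> {1..n} \<times> {1..n}"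
    and v: "valid_msgs n q x" "valid_msgs n q x'" and eq: "E x = E x'"
    and p: "(j, k) \<in> A'\<^sup>+" and xk: "x k = x' k"
  shows "x j = x' j"
  using p xk
proof (induction j rule: converse_trancl_induct)
  case (base j)
  then have a: "(j, k) \<in> A" using sub by auto
  then have "k \<in> {1..n}" using AV by auto
  have "D k (E x) (x k) j = x j" "D k (E x') (x' k) j = x' j"
    using code v a \<open>k \<in> {1..n}\<close> unfolding is_index_code_def by blast+
  then show ?case using eq base.prems by simp
next
  case (step j m)
  then have xm: "x m = x' m" by blast
  have a: "(j, m) \<in> A" using step sub by auto
  then have "m \<in> {1..n}" using AV by auto
  have "D m (E x) (x m) j = x j" "D m (E x') (x' m) j = x' j"
    using code v a \<open>m \<in> {1..n}\<close> unfolding is_index_code_def by blast+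
  then show ?case using eq xm by simp
qed

lemma lower:
  assumes code: "is_index_code n q A l E D"
    and sub: "A' \<subseteq> A" and AV: "A \<subseteq> {1..n} \<times> {1..n}"
  shows "(\<Sum>i \<in> {i \<in> {1..n}. \<exists>l \<in> leaves {1..n} A'. predecessor A' i l}. q i) \<le> l"
proof -
  define P where "P = {i \<in> {1..n}. \<exists>l \<in> leaves {1..n} A'. predecessor A' i l}"
  define x0 where "x0 = (\<lambda>j. if j \<in> {1..n} then replicate (q j) False else [])"
  define B where "B = (\<lambda>j. {xs::bool list. length xs = q j})"
  define g where "g = (\<lambda>y j. if j \<in> P then y j else x0 j)"
  have finP: "finite P" unfolding P_def by (rule finite_subset[of _ "{1..n}"]) auto
  have validg: "valid_msgs n q (g y)" if "y \<in> PiE P B" for y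
    using that unfolding valid_msgs_def g_def x0_def B_def P_def by auto
  have injg: "inj_on g (PiE P B)"
  proof (rule inj_onI)
    fix y y' assume "y \<in> PiE P B" "y' \<in> PiE P B" "g y = g y'"
    show "y = y'"
    proof (rule PiE_ext[OF \<open>y \<in> PiE P B\<close> \<open>y' \<in> PiE P B\<close>])
      fix j assume "j \<in> P"
      then show "y j = y' j" using fun_cong[OF \<open>g y = g y'\<close>, of j] unfolding g_def by simp
    qed
  qed
  have injE: "inj_on E (g ` PiE P B)"
  proof (rule inj_onI)
    fix x x' assume x: "x \<in> g ` PiE P B" and x': "x' \<in> g ` PiE P B" and eq: "E x = E x'"
    have vx: "valid_msgs n q x" using x validg by auto
    have vx': "valid_msgs n q x'" using x' validg by auto
    have out: "x j = x' j" if "j \<notin> P" for j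
      using x x' that unfolding g_def by auto
    show "x = x'"
    proof
      fix j show "x j = x' j"
      proof (cases "j \<in> P")
        case False then show ?thesis using out by auto
      next
        case True
        then obtain k where k: "k \<in> leaves {1..n} A'" "(j, k) \<in> A'\<^sup>+"
          unfolding P_def predecessor_def by auto
        have "k \<notin> P"
        proof
          assume "k \<in> P"
          then obtain m where "(k, m) \<in> A'\<^sup>+" unfolding P_def predecessor_def by auto
          then obtain m' where "(k, m') \<in> A'" by (meson converse_tranclE)
          then show False using k(1) unfolding leaves_def by auto
        qed
        then have "x k = x' k" using out by auto
        then show ?thesis using decode_path[OF code sub AV vx vx' eq k(2)] by auto
      qed
    qed
  qed
  have sub2: "E ` g ` PiE P B \<subseteq> {xs::bool list. length xs = l}"
    using code validg unfolding is_index_code_def by auto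
  have "card (E ` g ` PiE P B) = card (PiE P B)"
    using card_image[OF injE] card_image[OF injg] by simp
  also have "\<dots> = (\<Prod>j\<in>P. 2 ^ q j)"
    using finP by (simp add: card_PiE B_def bool_lists_card)
  also have "\<dots> = 2 ^ (\<Sum>j\<in>P. q j)" by (simp add: power_sum)
  finally have "(2::nat) ^ (\<Sum>j\<in>P. q j) \<le> 2 ^ l"
    using card_mono[OF bool_lists_fin sub2] by (simp add: bool_lists_card)
  then show ?thesis unfolding P_def by simp
qed

theorem lemma5:
  fixes n :: nat and q :: "nat \<Rightarrow> nat" and A :: "(nat \<times> nat) set"
  assumes "\<forall>i\<in>{1..n}. q i \<ge> 1"
    and "A \<subseteq> {1..n} \<times> {1..n}"
    and "\<forall>i. (i, i) \<notin> A"
  shows "opt_len n q A \<ge>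
    Max {(\<Sum>i \<in> {i \<in> {1..n}. \<exists>l \<in> leaves {1..n} A'. predecessor A' i l}. q i) | A'. A' \<subseteq> A}"
proof -
  have ex: "has_index_code n q A (opt_len n q A)"
    unfolding opt_len_def by (rule LeastI[where P="\<lambda>l. has_index_code n q A l", OF code_exists])
  then obtain E D where c: "is_index_code n q A (opt_len n q A) E D"
    unfolding has_index_code_def by blast
  have finA: "finite A" using assms(2) finite_subset by blast
  let ?S = "{(\<Sum>i \<in> {i \<in> {1..n}. \<exists>l \<in> leaves {1..n} A'. predecessor A' i l}. q i) | A'. A' \<subseteq> A}"
  have "?S = (\<lambda>A'. (\<Sum>i \<in> {i \<in> {1..n}. \<exists>l \<in> leaves {1..n} A'. predecessor A' i l}. q i)) ` Pow A"
    by auto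
  then have fin: "finite ?S" using finA by simp
  have ne: "?S \<noteq> {}" by blast
  show ?thesis
    unfolding Max_le_iff[OF fin ne]
  proof
    fix s assume "s \<in> ?S"
    then obtain A' where "A' \<subseteq> A" "s = (\<Sum>i \<in> {i \<in> {1..n}. \<exists>l \<in> leaves {1..n} A'. predecessor A' i l}. q i)"
      by blast
    then show "s \<le> opt_len n q A" using lower[OF c _ assms(2)] by simp
  qed
qed

end
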